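(* Let $(G_n)$ be a tight sequence of finite connected graphs with bounded average degree (i.e. $\sup_n 2|E(G_n)|/|V(G_n)|<\infty$) such that $\lim_n |V(G_n)|^{-1}\log\tau(G_n)=h$. Let $G'_n$ be connected subgraphs of $G_n$ such that $$\lim_{n\to\infty}|V(G_n)|^{-1}\bigl|\{x\in V(G'_n):\deg_{G'_n}(x)=\deg_{G_n}(x)\}\bigr|=1.$$ Then $\lim_n |V(G'_n)|^{-1}\log\tau(G'_n)=h$.
   Context: $\tau(G)$ is the number of spanning trees of $G$. For $R>0$ and a finite graph $G$, $\nu_R(G)$ is the distribution of the number of edges in the ball of radius $R$ about a uniformly random vertex of $G$. A collection of finite graphs is tight if for each $R$ the collection of corresponding distributions $\nu_R(G)$ is tight. *)

theory Defs
  imports "HOL-Probability.Probability"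
begin

definition graph :: "'a set \<Rightarrow> 'a set set \<Rightarrow> bool" where
  "graph V E \<longleftrightarrow> finite V \<and> (\<forall>e\<in>E. \<exists>x y. e = {x, y} \<and> x \<noteq> y \<and> x \<in> V \<and> y \<in> V)"

definition adj :: "'a set set \<Rightarrow> ('a \<times> 'a) set" where
  "adj E = {(x, y). {x, y} \<in> E}"

definition connected_graph :: "'a set \<Rightarrow> 'a set set \<Rightarrow> bool" where
  "connected_graph V E \<longleftrightarrow> graph V E \<and> V \<noteq> {} \<and> (\<forall>x\<in>V. \<forall>y\<in>V. (x, y) \<in> (adj E)\<^sup>*)"

definition has_cycle :: "'a set \<Rightarrow> 'a set set \<Rightarrow> bool" where
  "has_cycle V E \<longleftrightarrow> (\<exists>vs. length vs \<ge> 3 \<and> distinct vs \<and> set vs \<subseteq> V \<and>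
      (\<forall>i < length vs. {vs ! i, vs ! ((i + 1) mod length vs)} \<in> E))"

definition is_spanning_tree :: "'a set \<Rightarrow> 'a set set \<Rightarrow> 'a set set \<Rightarrow> bool" where
  "is_spanning_tree V E T \<longleftrightarrow> T \<subseteq> E \<and> connected_graph V T \<and> \<not> has_cycle V T"

definition tau :: "'a set \<Rightarrow> 'a set set \<Rightarrow> nat" where
  "tau V E = card {T. is_spanning_tree V E T}"

definition degree :: "'a set set \<Rightarrow> 'a \<Rightarrow> nat" where
  "degree E x = card {e \<in> E. x \<in> e}"

definition subgraph :: "'a set \<Rightarrow> 'a set set \<Rightarrow> 'a set \<Rightarrow> 'a set set \<Rightarrow> bool" where
  "subgraph V' E' V E \<longleftrightarrow> graph V' E' \<and> V' \<subseteq> V \<and> E' \<subseteq> E"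

definition gball :: "'a set \<Rightarrow> 'a set set \<Rightarrow> 'a \<Rightarrow> nat \<Rightarrow> 'a set" where
  "gball V E x R = {y \<in> V. \<exists>k \<le> R. (x, y) \<in> (adj E) ^^ k}"

definition ball_edges :: "'a set \<Rightarrow> 'a set set \<Rightarrow> 'a \<Rightarrow> nat \<Rightarrow> nat" where
  "ball_edges V E x R = card {e \<in> E. e \<subseteq> gball V E x R}"

definition nu :: "nat \<Rightarrow> 'a set \<Rightarrow> 'a set set \<Rightarrow> real measure" where
  "nu R V E = distr (measure_pmf (pmf_of_set V)) borel (\<lambda>x. real (ball_edges V E x R))"

definition tight_graphs :: "(nat \<Rightarrow> 'a set) \<Rightarrow> (nat \<Rightarrow> 'a set set) \<Rightarrow> bool" where
  "tight_graphs V E \<longleftrightarrow> (\<forall>R. tight (\<lambda>n. nu R (V n) (E n)))"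

end

theory Submission
  imports Defs "HOL-Library.Transitive_Closure_Table"
begin

lemma adj_sym: "(x, y) \<in> adj F \<Longrightarrow> (y, x) \<in> adj F"
  by (auto simp: adj_def insert_commute)

lemma conn_sym: "(x, y) \<in> (adj F)\<^sup>* \<Longrightarrow> (y, x) \<in> (adj F)\<^sup>*"
proof -
  have "sym (adj F)" by (auto simp: sym_def adj_sym)
  then have "sym ((adj F)\<^sup>*)" by (rule sym_rtrancl)
  then show "(x, y) \<in> (adj F)\<^sup>* \<Longrightarrow> (y, x) \<in> (adj F)\<^sup>*" by (auto simp: sym_def)
qed

lemma adj_mono: "F \<subseteq> G \<Longrightarrow> adj F \<subseteq> adj G"
  by (auto simp: adj_def)

lemma conn_mono: "F \<subseteq> G \<Longrightarrow> (x, y) \<in> (adj F)\<^sup>* \<Longrightarrow> (x, y) \<in> (adj G)\<^sup>*"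
  using rtrancl_mono[OF adj_mono] by blast

lemma adj_insert: "adj (insert {a, b} H) = adj H \<union> {(a, b), (b, a)}"
  by (auto simp: adj_def doubleton_eq_iff)

lemma conn_insert:
  assumes "(x, y) \<in> (adj (insert {a, b} H))\<^sup>*"
  shows "(x, y) \<in> (adj H)\<^sup>* \<or> (((x, a) \<in> (adj H)\<^sup>* \<or> (x, b) \<in> (adj H)\<^sup>*) \<and>
            ((a, y) \<in> (adj H)\<^sup>* \<or> (b, y) \<in> (adj H)\<^sup>*))"
  using assms
proof (induction rule: rtrancl_induct)
  case base
  then show ?case by simp
next
  case (step y z)
  from step(2) have yz: "(y, z) \<in> adj H \<or> (y, z) = (a, b) \<or> (y, z) = (b, a)"
    by (auto simp: adj_insert)
  from step(3) yz show ?case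
    by (elim disjE conjE) (auto intro: rtrancl_into_rtrancl)
qed

lemma graph_edge: "graph W F \<Longrightarrow> e \<in> F \<Longrightarrow> \<exists>x y. e = {x, y} \<and> x \<noteq> y \<and> x \<in> W \<and> y \<in> W"
  by (auto simp: graph_def)

lemma has_cycle_mono: "has_cycle U F \<Longrightarrow> U \<subseteq> W \<Longrightarrow> F \<subseteq> G \<Longrightarrow> has_cycle W G"
  unfolding has_cycle_def by blast

lemma has_cycle_graph: "has_cycle U F \<Longrightarrow> graph W F \<Longrightarrow> has_cycle W F"
proof -
  assume c: "has_cycle U F" and g: "graph W F"
  then obtain vs where vs: "length vs \<ge> 3" "distinct vs" "set vs \<subseteq> U"
    "\<forall>i < length vs. {vs ! i, vs ! ((i + 1) mod length vs)} \<in> F"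
    unfolding has_cycle_def by blast
  have "set vs \<subseteq> W"
  proof
    fix v assume "v \<in> set vs"
    then obtain i where i: "i < length vs" "vs ! i = v" by (auto simp: in_set_conv_nth)
    with vs(4) have "{v, vs ! ((i + 1) mod length vs)} \<in> F" by auto
    with g show "v \<in> W" by (force simp: graph_def doubleton_eq_iff)
  qed
  with vs show ?thesis unfolding has_cycle_def by blast
qed

lemma cycle_to_conn:
  assumes "has_cycle W F"
  shows "\<exists>a b. {a, b} \<in> F \<and> a \<noteq> b \<and> (a, b) \<in> (adj (F - {{a, b}}))\<^sup>*"
proof -
  from assms obtain vs where vs: "length vs \<ge> 3" "distinct vs" "set vs \<subseteq> W"
    and ed0: "\<forall>i < length vs. {vs ! i, vs ! ((i + 1) mod length vs)} \<in> F"
    unfolding has_cycle_def by auto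
  have ed: "{vs ! i, vs ! ((i + 1) mod length vs)} \<in> F" if "i < length vs" for i
    using ed0 that by blast
  define L where "L = length vs"
  define a where "a = vs ! 0"
  define b where "b = vs ! 1"
  define H where "H = F - {{a, b}}"
  have L3: "L \<ge> 3" using vs(1) L_def by simp
  have neq: "vs ! i \<noteq> vs ! j" if "i < L" "j < L" "i \<noteq> j" for i j
    using vs(2) that L_def by (simp add: nth_eq_iff_index_eq)
  have ab: "{a, b} \<in> F" proof -
    have "vs \<noteq> []" using vs(1) by auto
    then show ?thesis using ed[of 0] vs(1) a_def b_def by simp
  qed
  have anb: "a \<noteq> b" using neq[of 0 1] L3 a_def b_def by simp
  have notab: "{vs ! i, vs ! j} \<noteq> {a, b}" if "j < L" "j \<ge> 2" for i j
  proof
    assume "{vs ! i, vs ! j} = {a, b}"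
    then have "vs ! j = a \<or> vs ! j = b" by (auto simp: doubleton_eq_iff)
    moreover have "vs ! j \<noteq> vs ! 0" using neq[of j 0] that by simp
    moreover have "vs ! j \<noteq> vs ! 1" using neq[of j 1] that L3 by simp
    ultimately show False using a_def b_def by simp
  qed
  have path: "(b, vs ! j) \<in> (adj H)\<^sup>*" if "1 \<le> j" "j < L" for j
    using that
  proof (induction j)
    case 0
    then show ?case by simp
  next
    case (Suc j)
    show ?case
    proof (cases "j = 0")
      case True
      then show ?thesis using b_def by simp
    next
      case False
      then have IH: "(b, vs ! j) \<in> (adj H)\<^sup>*" using Suc by simp
      have "{vs ! j, vs ! ((j + 1) mod L)} \<in> F" using ed[of j] Suc(3) L_def by simp
      moreover have "(j + 1) mod L = Suc j" using Suc(3) by simp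
      ultimately have "{vs ! j, vs ! Suc j} \<in> F" by simp
      moreover have "{vs ! j, vs ! Suc j} \<noteq> {a, b}" using notab[of "Suc j" j] Suc(3) False by simp
      ultimately have "(vs ! j, vs ! Suc j) \<in> adj H" by (simp add: adj_def H_def)
      with IH show ?thesis by (rule rtrancl_into_rtrancl)
    qed
  qed
  have "{vs ! (L - 1), vs ! ((L - 1 + 1) mod L)} \<in> F" using ed[of "L - 1"] L3 L_def by simp
  moreover have "(L - 1 + 1) mod L = 0" using L3 by simp
  ultimately have "{vs ! (L - 1), a} \<in> F" using a_def by simp
  moreover have "{vs ! (L - 1), a} \<noteq> {a, b}"
  proof -
    have "vs ! (L - 1) \<noteq> b" using neq[of "L - 1" 1] L3 b_def by simp
    then show ?thesis by (auto simp: doubleton_eq_iff)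
  qed
  ultimately have "(vs ! (L - 1), a) \<in> adj H" by (simp add: adj_def H_def)
  moreover have "(b, vs ! (L - 1)) \<in> (adj H)\<^sup>*" using path[of "L - 1"] L3 by simp
  ultimately have "(b, a) \<in> (adj H)\<^sup>*" by (meson rtrancl_into_rtrancl)
  then have "(a, b) \<in> (adj H)\<^sup>*" by (rule conn_sym)
  then show ?thesis using ab anb unfolding H_def by blast
qed

lemma conn_to_cycle:
  assumes g: "graph W F" and ab: "{a, b} \<in> F" and anb: "a \<noteq> b"
    and c: "(a, b) \<in> (adj (F - {{a, b}}))\<^sup>*"
  shows "has_cycle W F"
proof -
  define H where "H = F - {{a, b}}"
  define R where "R = (\<lambda>x y. (x, y) \<in> adj H)"
  have "R\<^sup>*\<^sup>* a b" using c unfolding R_def H_def by (simp add: rtranclp_rtrancl_eq)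
  then obtain xs0 where "rtrancl_path R a xs0 b" by (auto simp: rtranclp_eq_rtrancl_path)
  then obtain xs where p: "rtrancl_path R a xs b" and d: "distinct (a # xs)"
    by (rule rtrancl_path_distinct)
  have xsne: "xs \<noteq> []" using p anb by (cases rule: rtrancl_path.cases) auto
  have lastb: "last xs = b" using rtrancl_path_last[OF p xsne] .
  have "xs \<noteq> [b]"
  proof
    assume "xs = [b]"
    with p have "R a b" by (auto elim: rtrancl_path.cases)
    then show False unfolding R_def H_def adj_def by simp
  qed
  have len2: "length xs \<ge> 2"
  proof (rule ccontr)
    assume "\<not> 2 \<le> length xs"
    with xsne have "length xs = 1" by (cases xs) (auto simp: Suc_le_eq)
    then obtain x where "xs = [x]" by (auto simp: length_Suc_conv)
    with lastb \<open>xs \<noteq> [b]\<close> show False by simp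
  qed
  define vs where "vs = a # xs"
  have "\<forall>i < length vs. {vs ! i, vs ! ((i + 1) mod length vs)} \<in> F"
  proof (intro allI impI)
    fix i assume i: "i < length vs"
    show "{vs ! i, vs ! ((i + 1) mod length vs)} \<in> F"
    proof (cases "i < length xs")
      case True
      then have "R ((a # xs) ! i) (xs ! i)" by (rule rtrancl_path_nth[OF p])
      moreover have "(i + 1) mod length vs = i + 1" using True vs_def by simp
      ultimately show ?thesis unfolding R_def H_def adj_def vs_def by simp
    next
      case False
      then have "i = length xs" using i vs_def by simp
      moreover have "vs ! length xs = b" using lastb xsne vs_def by (simp add: last_conv_nth)
      moreover have "(length xs + 1) mod length vs = 0" using vs_def by simp
      ultimately show ?thesis using ab vs_def by (simp add: insert_commute)
    qed
  qed
  moreover have "length vs \<ge> 3" using len2 vs_def by simp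
  moreover have "distinct vs" using d vs_def by simp
  ultimately have "has_cycle UNIV F" unfolding has_cycle_def by blast
  then show ?thesis using g by (rule has_cycle_graph)
qed

lemma cycle_char:
  assumes "graph W F"
  shows "has_cycle W F \<longleftrightarrow> (\<exists>a b. {a, b} \<in> F \<and> a \<noteq> b \<and> (a, b) \<in> (adj (F - {{a, b}}))\<^sup>*)"
proof
  assume "has_cycle W F"
  then show "\<exists>a b. {a, b} \<in> F \<and> a \<noteq> b \<and> (a, b) \<in> (adj (F - {{a, b}}))\<^sup>*"
    by (rule cycle_to_conn)
next
  assume "\<exists>a b. {a, b} \<in> F \<and> a \<noteq> b \<and> (a, b) \<in> (adj (F - {{a, b}}))\<^sup>*"
  then obtain a b where "{a, b} \<in> F" "a \<noteq> b" "(a, b) \<in> (adj (F - {{a, b}}))\<^sup>*" by blast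
  then show "has_cycle W F" by (rule conn_to_cycle[OF assms])
qed

lemma graph_subset: "graph W F \<Longrightarrow> G \<subseteq> F \<Longrightarrow> graph W G"
  unfolding graph_def by (meson subsetD)

lemma graph_finite_edges: "graph W F \<Longrightarrow> finite F"
proof -
  assume g: "graph W F"
  then have "F \<subseteq> Pow W" unfolding graph_def by auto
  moreover have "finite W" using g unfolding graph_def by blast
  ultimately show "finite F" by (meson finite_Pow_iff finite_subset)
qed

lemma add_edge_acyclic:
  assumes g: "graph W F" and ac: "\<not> has_cycle W F" and a: "a \<in> W" and b: "b \<in> W"
    and anb: "a \<noteq> b" and nc: "(a, b) \<notin> (adj F)\<^sup>*"
  shows "\<not> has_cycle W (insert {a, b} F)"
proof
  assume hc: "has_cycle W (insert {a, b} F)"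
  then obtain c d where cd: "{c, d} \<in> insert {a, b} F" "c \<noteq> d"
    and cc: "(c, d) \<in> (adj (insert {a, b} F - {{c, d}}))\<^sup>*"
    using cycle_to_conn[OF hc] by auto
  show False
  proof (cases "{c, d} = {a, b}")
    case True
    then have "insert {a, b} F - {{c, d}} \<subseteq> F" by auto
    from conn_mono[OF this cc] have "(c, d) \<in> (adj F)\<^sup>*" .
    moreover have "(c = a \<and> d = b) \<or> (c = b \<and> d = a)" using True by (auto simp: doubleton_eq_iff)
    ultimately have "(a, b) \<in> (adj F)\<^sup>*" using conn_sym[of c d F] by auto
    with nc show False by simp
  next
    case False
    define H where "H = F - {{c, d}}"
    have cdF: "{c, d} \<in> F" using cd False by auto
    have HF: "H \<subseteq> F" unfolding H_def by blast
    have eq: "insert {a, b} F - {{c, d}} = insert {a, b} H" using False unfolding H_def by blast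
    have notH: "(c, d) \<notin> (adj H)\<^sup>*"
    proof
      assume "(c, d) \<in> (adj H)\<^sup>*"
      then have "has_cycle W F" using conn_to_cycle[OF g cdF cd(2)] unfolding H_def by simp
      with ac show False by simp
    qed
    have cdadj: "(c, d) \<in> (adj F)\<^sup>*" using cdF by (auto simp: adj_def)
    have m: "\<And>x y. (x, y) \<in> (adj H)\<^sup>* \<Longrightarrow> (x, y) \<in> (adj F)\<^sup>*" by (rule conn_mono[OF HF])
    have "(c, d) \<in> (adj (insert {a, b} H))\<^sup>*" using cc eq by simp
    from conn_insert[OF this] notH
    have "((c, a) \<in> (adj H)\<^sup>* \<or> (c, b) \<in> (adj H)\<^sup>*) \<and> ((a, d) \<in> (adj H)\<^sup>* \<or> (b, d) \<in> (adj H)\<^sup>*)"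
      by blast
    then show False
    proof (elim conjE disjE)
      assume "(c, a) \<in> (adj H)\<^sup>*" "(a, d) \<in> (adj H)\<^sup>*"
      then have "(c, d) \<in> (adj H)\<^sup>*" by (rule rtrancl_trans)
      with notH show False by simp
    next
      assume "(c, b) \<in> (adj H)\<^sup>*" "(b, d) \<in> (adj H)\<^sup>*"
      then have "(c, d) \<in> (adj H)\<^sup>*" by (rule rtrancl_trans)
      with notH show False by simp
    next
      assume 1: "(c, a) \<in> (adj H)\<^sup>*" and 2: "(b, d) \<in> (adj H)\<^sup>*"
      have "(a, c) \<in> (adj F)\<^sup>*" using m[OF 1] by (rule conn_sym)
      also have "(c, d) \<in> (adj F)\<^sup>*" by (rule cdadj)
      also have "(d, b) \<in> (adj F)\<^sup>*" using m[OF 2] by (rule conn_sym)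
      finally show False using nc by simp
    next
      assume 1: "(c, b) \<in> (adj H)\<^sup>*" and 2: "(a, d) \<in> (adj H)\<^sup>*"
      have "(b, c) \<in> (adj F)\<^sup>*" using m[OF 1] by (rule conn_sym)
      also have "(c, d) \<in> (adj F)\<^sup>*" by (rule cdadj)
      also have "(d, a) \<in> (adj F)\<^sup>*" using m[OF 2] by (rule conn_sym)
      finally have "(b, a) \<in> (adj F)\<^sup>*" .
      then have "(a, b) \<in> (adj F)\<^sup>*" by (rule conn_sym)
      then show False using nc by simp
    qed
  qed
qed

definition cls :: "'a set set \<Rightarrow> 'a set \<Rightarrow> 'a \<Rightarrow> 'a set" where
  "cls F W x = {y \<in> W. (x, y) \<in> (adj F)\<^sup>*}"

definition comps :: "'a set \<Rightarrow> 'a set set \<Rightarrow> 'a set set" where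
  "comps W F = cls F W ` W"

lemma conn_insert_same:
  assumes "(a, b) \<in> (adj F)\<^sup>*"
  shows "(adj (insert {a, b} F))\<^sup>* = (adj F)\<^sup>*"
proof
  show "(adj F)\<^sup>* \<subseteq> (adj (insert {a, b} F))\<^sup>*" by (rule rtrancl_mono[OF adj_mono]) blast
next
  have ba: "(b, a) \<in> (adj F)\<^sup>*" using assms by (rule conn_sym)
  show "(adj (insert {a, b} F))\<^sup>* \<subseteq> (adj F)\<^sup>*"
  proof clarify
    fix x y assume "(x, y) \<in> (adj (insert {a, b} F))\<^sup>*"
    from conn_insert[OF this] show "(x, y) \<in> (adj F)\<^sup>*"
    proof (elim disjE conjE)
      assume "(x, a) \<in> (adj F)\<^sup>*" "(a, y) \<in> (adj F)\<^sup>*"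
      then show ?thesis by (rule rtrancl_trans)
    next
      assume "(x, b) \<in> (adj F)\<^sup>*" "(b, y) \<in> (adj F)\<^sup>*"
      then show ?thesis by (rule rtrancl_trans)
    next
      assume 1: "(x, a) \<in> (adj F)\<^sup>*" and 2: "(b, y) \<in> (adj F)\<^sup>*"
      show ?thesis by (rule rtrancl_trans[OF rtrancl_trans[OF 1 assms] 2])
    next
      assume 1: "(x, b) \<in> (adj F)\<^sup>*" and 2: "(a, y) \<in> (adj F)\<^sup>*"
      show ?thesis by (rule rtrancl_trans[OF rtrancl_trans[OF 1 ba] 2])
    qed
  qed
qed

lemma conn_insert_iff:
  "(x, y) \<in> (adj (insert {a, b} F))\<^sup>* \<longleftrightarrow> (x, y) \<in> (adj F)\<^sup>* \<or>
     (((x, a) \<in> (adj F)\<^sup>* \<or> (x, b) \<in> (adj F)\<^sup>*) \<and> ((a, y) \<in> (adj F)\<^sup>* \<or> (b, y) \<in> (adj F)\<^sup>*))"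
proof
  assume "(x, y) \<in> (adj (insert {a, b} F))\<^sup>*"
  then show "(x, y) \<in> (adj F)\<^sup>* \<or>
     (((x, a) \<in> (adj F)\<^sup>* \<or> (x, b) \<in> (adj F)\<^sup>*) \<and> ((a, y) \<in> (adj F)\<^sup>* \<or> (b, y) \<in> (adj F)\<^sup>*))"
    by (rule conn_insert)
next
  define C where "C = (adj (insert {a, b} F))\<^sup>*"
  have m: "\<And>u v. (u, v) \<in> (adj F)\<^sup>* \<Longrightarrow> (u, v) \<in> C"
    unfolding C_def using conn_mono[of F "insert {a, b} F"] by blast
  have ab: "(a, b) \<in> C" "(b, a) \<in> C" unfolding C_def by (auto simp: adj_insert)
  assume "(x, y) \<in> (adj F)\<^sup>* \<or>
     (((x, a) \<in> (adj F)\<^sup>* \<or> (x, b) \<in> (adj F)\<^sup>*) \<and> ((a, y) \<in> (adj F)\<^sup>* \<or> (b, y) \<in> (adj F)\<^sup>*))"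
  then have "(x, y) \<in> C"
  proof (elim disjE conjE)
    assume "(x, y) \<in> (adj F)\<^sup>*" then show ?thesis by (rule m)
  next
    assume "(x, a) \<in> (adj F)\<^sup>*" "(a, y) \<in> (adj F)\<^sup>*"
    then show ?thesis using m unfolding C_def by (meson rtrancl_trans)
  next
    assume "(x, a) \<in> (adj F)\<^sup>*" "(b, y) \<in> (adj F)\<^sup>*"
    then show ?thesis using m ab unfolding C_def by (meson rtrancl_trans)
  next
    assume "(x, b) \<in> (adj F)\<^sup>*" "(a, y) \<in> (adj F)\<^sup>*"
    then show ?thesis using m ab unfolding C_def by (meson rtrancl_trans)
  next
    assume "(x, b) \<in> (adj F)\<^sup>*" "(b, y) \<in> (adj F)\<^sup>*"
    then show ?thesis using m unfolding C_def by (meson rtrancl_trans)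
  qed
  then show "(x, y) \<in> (adj (insert {a, b} F))\<^sup>*" unfolding C_def .
qed

lemma comps_merge:
  assumes W: "finite W" and a: "a \<in> W" and b: "b \<in> W" and nc: "(a, b) \<notin> (adj F)\<^sup>*"
  shows "card (comps W (insert {a, b} F)) + 1 = card (comps W F)"
proof -
  define C where "C = (adj F)\<^sup>*"
  define P where "P = (\<lambda>x. (x, a) \<in> C \<or> (x, b) \<in> C)"
  define R where "R = cls F W ` {x \<in> W. \<not> P x}"
  have trans: "(x, z) \<in> C" if "(x, y) \<in> C" "(y, z) \<in> C" for x y z
    using that unfolding C_def by (rule rtrancl_trans)
  have sym: "(y, x) \<in> C" if "(x, y) \<in> C" for x y using that unfolding C_def by (rule conn_sym)
  have refl: "(x, x) \<in> C" for x unfolding C_def by simp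
  have cls_eq: "cls F W x = cls F W y" if "(x, y) \<in> C" for x y
    using that unfolding cls_def C_def[symmetric] by (auto intro: trans sym)
  have new: "cls (insert {a, b} F) W x = (if P x then cls F W a \<union> cls F W b else cls F W x)"
    if "x \<in> W" for x
    unfolding cls_def conn_insert_iff C_def[symmetric] P_def
    by (auto intro: trans sym refl)
  have comps_new: "comps W (insert {a, b} F) = insert (cls F W a \<union> cls F W b) R"
  proof -
    have "comps W (insert {a, b} F) = (\<lambda>x. if P x then cls F W a \<union> cls F W b else cls F W x) ` W"
      unfolding comps_def using new by (auto simp: image_def)
    also have "\<dots> = insert (cls F W a \<union> cls F W b) R"
      unfolding R_def using a refl P_def by (auto simp: image_def split: if_splits)
    finally show ?thesis .
  qed
  have comps_old: "comps W F = insert (cls F W a) (insert (cls F W b) R)"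
  proof -
    have "cls F W x = cls F W a \<or> cls F W x = cls F W b" if "P x" for x
      using that cls_eq unfolding P_def by blast
    then show ?thesis unfolding comps_def R_def using a b by (auto simp: image_def)
  qed
  have aa: "a \<in> cls F W a" and bb: "b \<in> cls F W b" using a b refl unfolding cls_def C_def by auto
  have memP: "P x" if "x \<in> W" "a \<in> cls F W x \<or> b \<in> cls F W x" for x
    using that unfolding P_def cls_def C_def[symmetric] by auto
  have nR: "S \<notin> R" if "a \<in> S \<or> b \<in> S" for S
  proof
    assume "S \<in> R"
    then obtain x where "x \<in> W" "\<not> P x" "S = cls F W x" unfolding R_def by blast
    with memP that show False by blast
  qed
  have ne: "cls F W a \<noteq> cls F W b"
  proof
    assume "cls F W a = cls F W b"
    with bb have "b \<in> cls F W a" by simp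
    then have "(a, b) \<in> C" unfolding cls_def C_def by simp
    with nc show False unfolding C_def by simp
  qed
  have fR: "finite R" unfolding R_def using W by simp
  have "card (comps W (insert {a, b} F)) = card R + 1"
    unfolding comps_new using nR[of "cls F W a \<union> cls F W b"] aa fR by simp
  moreover have "card (comps W F) = card R + 2"
    unfolding comps_old using nR[of "cls F W a"] nR[of "cls F W b"] aa bb ne fR by simp
  ultimately show ?thesis by simp
qed

lemma comps_empty: "comps W {} = (\<lambda>x. {x}) ` W"
proof -
  have "cls {} W x = {x}" if "x \<in> W" for x
    using that unfolding cls_def adj_def by auto
  then show ?thesis unfolding comps_def by (auto simp: image_def)
qed

lemma count_aux:
  assumes "finite F"
  shows "graph W F \<Longrightarrow> card W \<le> card F + card (comps W F) \<and>
           (\<not> has_cycle W F \<longrightarrow> card W = card F + card (comps W F))"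
  using assms
proof (induction F rule: finite_induct)
  case empty
  have "finite W" using empty unfolding graph_def by simp
  have "card (comps W {}) = card W"
    unfolding comps_empty by (rule card_image) (auto simp: inj_on_def)
  then show ?case by simp
next
  case (insert e F)
  have gW: "graph W (insert e F)" by fact
  then have g: "graph W F" by (rule graph_subset) blast
  have W: "finite W" using g unfolding graph_def by simp
  from graph_edge[OF gW] obtain a b where e: "e = {a, b}" "a \<noteq> b" "a \<in> W" "b \<in> W" by blast
  have IH: "card W \<le> card F + card (comps W F)"
    "\<not> has_cycle W F \<Longrightarrow> card W = card F + card (comps W F)" using insert.IH[OF g] by auto
  have cF: "card (insert e F) = card F + 1" using insert.hyps by simp
  show ?case
  proof (cases "(a, b) \<in> (adj F)\<^sup>*")
    case True
    have "comps W (insert e F) = comps W F"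
      unfolding comps_def cls_def e conn_insert_same[OF True] ..
    moreover have "has_cycle W (insert {a, b} F)"
    proof (rule conn_to_cycle[OF gW[unfolded e] _ e(2)])
      show "{a, b} \<in> insert {a, b} F" by simp
      have "insert {a, b} F - {{a, b}} = F" using insert.hyps e by auto
      then show "(a, b) \<in> (adj (insert {a, b} F - {{a, b}}))\<^sup>*" using True by simp
    qed
    ultimately show ?thesis using IH cF e by simp
  next
    case False
    have m: "card (comps W (insert e F)) + 1 = card (comps W F)"
      unfolding e by (rule comps_merge[OF W e(3) e(4) False])
    have "\<not> has_cycle W F" if "\<not> has_cycle W (insert e F)"
      using that has_cycle_mono[of W F W "insert e F"] by blast
    then show ?thesis using IH cF m by auto
  qed
qed

lemma count_le: "graph W F \<Longrightarrow> card W \<le> card F + card (comps W F)"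
  using count_aux[OF graph_finite_edges] by blast

lemma count_eq: "graph W F \<Longrightarrow> \<not> has_cycle W F \<Longrightarrow> card W = card F + card (comps W F)"
  using count_aux[OF graph_finite_edges] by blast

lemma forest_card: "graph W F \<Longrightarrow> \<not> has_cycle W F \<Longrightarrow> card F \<le> card W"
  using count_eq by fastforce

lemma comps_connected: "connected_graph V T \<Longrightarrow> comps V T = {V}"
proof -
  assume c: "connected_graph V T"
  then have "cls T V x = V" if "x \<in> V" for x
    using that unfolding cls_def connected_graph_def by auto
  moreover have "V \<noteq> {}" using c unfolding connected_graph_def by simp
  ultimately show ?thesis unfolding comps_def by auto
qed

lemma connected_card: "connected_graph V T \<Longrightarrow> card V \<le> card T + 1"
  using count_le[of V T] comps_connected[of V T] unfolding connected_graph_def by simp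

lemma tree_card: "is_spanning_tree V E T \<Longrightarrow> card V = card T + 1"
  using count_eq[of V T] comps_connected[of V T] unfolding is_spanning_tree_def connected_graph_def
  by simp

lemma crossing:
  assumes "(x, y) \<in> R\<^sup>*" "x \<in> S" "y \<notin> S"
  shows "\<exists>u v. (u, v) \<in> R \<and> u \<in> S \<and> v \<notin> S"
  using assms by (induction rule: rtrancl_induct) auto

lemma extend_forest:
  assumes c: "connected_graph V E" and FE: "F \<subseteq> E" and ac: "\<not> has_cycle V F"
  shows "\<exists>T. is_spanning_tree V E T \<and> F \<subseteq> T"
proof -
  have gE: "graph V E" using c unfolding connected_graph_def by simp
  define M where "M = {T. F \<subseteq> T \<and> T \<subseteq> E \<and> \<not> has_cycle V T}"
  have fM: "finite M" unfolding M_def using graph_finite_edges[OF gE]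
    by (rule rev_finite_subset[OF finite_Pow_iff[THEN iffD2]]) auto
  have "F \<in> M" unfolding M_def using FE ac by simp
  then obtain T where T: "T \<in> M" and mx: "\<And>T'. T' \<in> M \<Longrightarrow> T \<subseteq> T' \<Longrightarrow> T' = T"
    using finite_has_maximal[OF fM] by blast
  have TE: "T \<subseteq> E" and FT: "F \<subseteq> T" and acT: "\<not> has_cycle V T" using T unfolding M_def by auto
  have gT: "graph V T" using gE TE by (rule graph_subset)
  have allc: "(x, y) \<in> (adj T)\<^sup>*" if "x \<in> V" "y \<in> V" for x y
  proof (rule ccontr)
    assume ny: "(x, y) \<notin> (adj T)\<^sup>*"
    define S where "S = {z. (x, z) \<in> (adj T)\<^sup>*}"
    have "(x, y) \<in> (adj E)\<^sup>*" using c that unfolding connected_graph_def by blast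
    then obtain u v where uv: "(u, v) \<in> adj E" "u \<in> S" "v \<notin> S"
      using crossing[of x y "adj E" S] ny unfolding S_def by auto
    have uvE: "{u, v} \<in> E" using uv(1) unfolding adj_def by simp
    have nuv: "(u, v) \<notin> (adj T)\<^sup>*"
    proof
      assume "(u, v) \<in> (adj T)\<^sup>*"
      with uv(2) have "(x, v) \<in> (adj T)\<^sup>*" unfolding S_def by (simp add: rtrancl_trans)
      with uv(3) show False unfolding S_def by simp
    qed
    have uneqv: "u \<noteq> v" using nuv by auto
    obtain p q where pq: "{u, v} = {p, q}" "p \<noteq> q" "p \<in> V" "q \<in> V" using graph_edge[OF gE uvE] by blast
    have uV: "u \<in> V" "v \<in> V" using pq by (auto simp: doubleton_eq_iff)
    have "\<not> has_cycle V (insert {u, v} T)"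
      by (rule add_edge_acyclic[OF gT acT uV uneqv nuv])
    then have "insert {u, v} T \<in> M" using T uvE unfolding M_def by auto
    then have "insert {u, v} T = T" using mx by blast
    then have "{u, v} \<in> T" by blast
    then have "(u, v) \<in> (adj T)\<^sup>*" unfolding adj_def by auto
    with nuv show False by simp
  qed
  have "V \<noteq> {}" using c unfolding connected_graph_def by simp
  then have "is_spanning_tree V E T"
    unfolding is_spanning_tree_def connected_graph_def using TE gT acT allc by blast
  with FT show ?thesis by blast
qed

lemma tau_pos: "connected_graph V E \<Longrightarrow> tau V E \<ge> 1"
proof -
  assume c: "connected_graph V E"
  have "\<not> has_cycle V {}" unfolding has_cycle_def by force
  then obtain T where T: "is_spanning_tree V E T" using extend_forest[OF c] by blast
  have gE: "graph V E" using c unfolding connected_graph_def by simp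
  have "{T. is_spanning_tree V E T} \<subseteq> Pow E" unfolding is_spanning_tree_def by auto
  then have "finite {T. is_spanning_tree V E T}"
    using graph_finite_edges[OF gE] by (meson finite_Pow_iff finite_subset)
  moreover have "{T. is_spanning_tree V E T} \<noteq> {}" using T by blast
  ultimately show ?thesis unfolding tau_def by (simp add: Suc_leI card_gt_0_iff)
qed

lemma finite_ST: "graph V E \<Longrightarrow> finite {T. is_spanning_tree V E T}"
proof -
  assume gE: "graph V E"
  have "{T. is_spanning_tree V E T} \<subseteq> Pow E" unfolding is_spanning_tree_def by auto
  then show ?thesis using graph_finite_edges[OF gE] by (meson finite_Pow_iff finite_subset)
qed

lemma finite_small: "finite E \<Longrightarrow> finite {S. S \<subseteq> E \<and> card S \<le> k}"
proof -
  assume "finite E"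
  moreover have "{S. S \<subseteq> E \<and> card S \<le> k} \<subseteq> Pow E" by auto
  ultimately show ?thesis by (meson finite_Pow_iff finite_subset)
qed

lemma good_edge:
  assumes gE: "graph V E" and EE: "E' \<subseteq> E" and x: "degree E' x = degree E x"
    and e: "e \<in> E" "x \<in> e"
  shows "e \<in> E'"
proof -
  have fin: "finite {e \<in> E. x \<in> e}" using graph_finite_edges[OF gE] by simp
  have sub: "{e \<in> E'. x \<in> e} \<subseteq> {e \<in> E. x \<in> e}" using EE by auto
  have "{e \<in> E'. x \<in> e} = {e \<in> E. x \<in> e}"
    using card_subset_eq[OF fin sub] x unfolding degree_def by simp
  then show ?thesis using e by blast
qed

lemma tau_hard:
  assumes cG: "connected_graph V E" and cG': "connected_graph V' E'"
    and sub: "subgraph V' E' V E"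
  shows "tau V E \<le> tau V' E' * card {S. S \<subseteq> E \<and> card S \<le> 2 * (card V - card {x \<in> V'. degree E' x = degree E x})}"
proof -
  define Good where "Good = {x \<in> V'. degree E' x = degree E x}"
  define b where "b = card V - card Good"
  define ext where "ext = (\<lambda>F. SOME T'. is_spanning_tree V' E' T' \<and> F \<subseteq> T')"
  define f where "f = (\<lambda>T. (ext (T \<inter> E'), (T - E') \<union> (ext (T \<inter> E') - T)))"
  define g where "g = (\<lambda>(T'::'a set set, S). (S - E') \<union> (T' - (S \<inter> E')))"
  have gE: "graph V E" using cG unfolding connected_graph_def by simp
  have VV: "V' \<subseteq> V" and EE: "E' \<subseteq> E" using sub unfolding subgraph_def by auto
  have fV: "finite V" using gE unfolding graph_def by simp
  have GV: "Good \<subseteq> V" using VV unfolding Good_def by auto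
  have cardB: "card (V - Good) = b" unfolding b_def using card_Diff_subset[OF finite_subset[OF GV fV] GV] .
  have cV': "card V' \<le> card V" using card_mono[OF fV VV] .
  have key: "ext (T \<inter> E') \<in> {T'. is_spanning_tree V' E' T'} \<and>
      (T - E') \<union> (ext (T \<inter> E') - T) \<in> {S. S \<subseteq> E \<and> card S \<le> 2 * b} \<and> g (f T) = T"
    if T: "is_spanning_tree V E T" for T
  proof -
    have TE: "T \<subseteq> E" and acT: "\<not> has_cycle V T" using T unfolding is_spanning_tree_def by auto
    have gT: "graph V T" using T unfolding is_spanning_tree_def connected_graph_def by simp
    have fT: "finite T" using graph_finite_edges[OF gT] .
    have "\<not> has_cycle V' (T \<inter> E')"
      using acT has_cycle_mono[of V' "T \<inter> E'" V T] VV by blast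
    then have "\<exists>T'. is_spanning_tree V' E' T' \<and> T \<inter> E' \<subseteq> T'"
      using extend_forest[OF cG'] by blast
    then have T': "is_spanning_tree V' E' (ext (T \<inter> E')) \<and> T \<inter> E' \<subseteq> ext (T \<inter> E')"
      unfolding ext_def by (rule someI_ex)
    define T' where "T' = ext (T \<inter> E')"
    have T'1: "is_spanning_tree V' E' T'" and T'2: "T \<inter> E' \<subseteq> T'" using T' T'_def by auto
    have T'E: "T' \<subseteq> E'" using T'1 unfolding is_spanning_tree_def by simp
    have gT': "graph V' T'" using T'1 unfolding is_spanning_tree_def connected_graph_def by simp
    have fT': "finite T'" using graph_finite_edges[OF gT'] .
    define A where "A = T - E'"
    have gA: "graph (V - Good) A"
      unfolding graph_def
    proof
      show "finite (V - Good)" using fV by simp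
      show "\<forall>e\<in>A. \<exists>x y. e = {x, y} \<and> x \<noteq> y \<and> x \<in> V - Good \<and> y \<in> V - Good"
      proof
        fix e assume eA: "e \<in> A"
        then have eE: "e \<in> E" and eE': "e \<notin> E'" using TE unfolding A_def by auto
        obtain x y where xy: "e = {x, y}" "x \<noteq> y" "x \<in> V" "y \<in> V" using graph_edge[OF gE eE] by blast
        have "x \<notin> Good" using good_edge[OF gE EE _ eE] eE' xy unfolding Good_def by auto
        moreover have "y \<notin> Good" using good_edge[OF gE EE _ eE] eE' xy unfolding Good_def by auto
        ultimately show "\<exists>x y. e = {x, y} \<and> x \<noteq> y \<and> x \<in> V - Good \<and> y \<in> V - Good"
          using xy by blast
      qed
    qed
    have "\<not> has_cycle (V - Good) A"
      using acT has_cycle_mono[of "V - Good" A V T] unfolding A_def by blast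
    then have cA: "card A \<le> b" using forest_card[OF gA] cardB by simp
    have c1: "card V' = card T' + 1" using tree_card[OF T'1] .
    have c2: "card V = card T + 1" using tree_card[OF T] .
    have "T' \<inter> T = T \<inter> E'" using T'2 T'E by auto
    have c3: "card T' = card (T' - T) + card (T \<inter> E')"
      using card_Diff_subset_Int[of T' T] fT' \<open>T' \<inter> T = T \<inter> E'\<close>
      by (metis Diff_Diff_Int card_Diff_subset finite_Diff Diff_subset add.commute
          le_add_diff_inverse2 card_mono)
    have c4: "card T = card (T \<inter> E') + card A"
      unfolding A_def using card_Un_disjoint[of "T \<inter> E'" "T - E'"] fT
      by (metis Int_Diff_Un Int_Diff_disjoint finite_Diff finite_Int)
    have cD: "card (T' - T) \<le> card A" using c1 c2 c3 c4 cV' by linarith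
    have "card (A \<union> (T' - T)) \<le> card A + card (T' - T)" by (rule card_Un_le)
    then have cS: "card (A \<union> (T' - T)) \<le> 2 * b" using cA cD by linarith
    have sS: "A \<union> (T' - T) \<subseteq> E" using TE T'E EE unfolding A_def by auto
    have gf: "g (f T) = T"
      unfolding g_def f_def T'_def[symmetric] using T'2 T'E by auto
    show ?thesis using T'1 cS sS gf unfolding T'_def A_def by simp
  qed
  have inj: "inj_on f {T. is_spanning_tree V E T}"
    by (rule inj_on_inverseI[of _ g]) (use key in auto)
  have img: "f ` {T. is_spanning_tree V E T} \<subseteq>
      {T'. is_spanning_tree V' E' T'} \<times> {S. S \<subseteq> E \<and> card S \<le> 2 * b}"
    using key unfolding f_def by auto
  have gE': "graph V' E'" using cG' unfolding connected_graph_def by simp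
  have fin: "finite ({T'. is_spanning_tree V' E' T'} \<times> {S. S \<subseteq> E \<and> card S \<le> 2 * b})"
    using finite_ST[OF gE'] finite_small[OF graph_finite_edges[OF gE]] by simp
  have "tau V E \<le> card ({T'. is_spanning_tree V' E' T'} \<times> {S. S \<subseteq> E \<and> card S \<le> 2 * b})"
    unfolding tau_def using card_inj_on_le[OF inj img fin] .
  then show ?thesis unfolding tau_def b_def Good_def by (simp add: card_cartesian_product)
qed

lemma tau_easy:
  assumes cG: "connected_graph V E" and cG': "connected_graph V' E'"
    and sub: "subgraph V' E' V E"
  shows "tau V' E' \<le> tau V E * card {S. S \<subseteq> E \<and> card S \<le> card V - card {x \<in> V'. degree E' x = degree E x}}"
proof -
  define Good where "Good = {x \<in> V'. degree E' x = degree E x}"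
  define b where "b = card V - card Good"
  define ext where "ext = (\<lambda>F. SOME T. is_spanning_tree V E T \<and> F \<subseteq> T)"
  define f where "f = (\<lambda>T'. (ext T', ext T' - T'))"
  define g where "g = (\<lambda>(T::'a set set, D). T - D)"
  have gE: "graph V E" using cG unfolding connected_graph_def by simp
  have gE': "graph V' E'" using cG' unfolding connected_graph_def by simp
  have VV: "V' \<subseteq> V" and EE: "E' \<subseteq> E" using sub unfolding subgraph_def by auto
  have fV: "finite V" using gE unfolding graph_def by simp
  have fV': "finite V'" using gE' unfolding graph_def by simp
  have GV: "Good \<subseteq> V'" unfolding Good_def by auto
  have cG'V: "card Good \<le> card V'" using card_mono[OF fV' GV] .
  have key: "ext T' \<in> {T. is_spanning_tree V E T} \<and>
      ext T' - T' \<in> {S. S \<subseteq> E \<and> card S \<le> b} \<and> g (f T') = T'"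
    if T': "is_spanning_tree V' E' T'" for T'
  proof -
    have TE': "T' \<subseteq> E'" and acT': "\<not> has_cycle V' T'" using T' unfolding is_spanning_tree_def by auto
    have gT': "graph V' T'" using T' unfolding is_spanning_tree_def connected_graph_def by simp
    have fT': "finite T'" using graph_finite_edges[OF gT'] .
    have "\<not> has_cycle V T'" using acT' has_cycle_graph[OF _ gT'] by blast
    then have "\<exists>T. is_spanning_tree V E T \<and> T' \<subseteq> T"
      using extend_forest[OF cG] TE' EE by blast
    then have T0: "is_spanning_tree V E (ext T') \<and> T' \<subseteq> ext T'"
      unfolding ext_def by (rule someI_ex)
    define T where "T = ext T'"
    have T1: "is_spanning_tree V E T" and T2: "T' \<subseteq> T" using T0 T_def by auto
    have TE: "T \<subseteq> E" using T1 unfolding is_spanning_tree_def by simp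
    have c1: "card V' = card T' + 1" using tree_card[OF T'] .
    have c2: "card V = card T + 1" using tree_card[OF T1] .
    have "card (T - T') = card T - card T'" using card_Diff_subset[OF fT' T2] .
    then have cD: "card (T - T') \<le> b" unfolding b_def using c1 c2 cG'V by linarith
    have gf: "g (f T') = T'" unfolding g_def f_def T_def[symmetric] using T2 by auto
    show ?thesis using T1 cD TE gf unfolding T_def by auto
  qed
  have inj: "inj_on f {T'. is_spanning_tree V' E' T'}"
    by (rule inj_on_inverseI[of _ g]) (use key in auto)
  have img: "f ` {T'. is_spanning_tree V' E' T'} \<subseteq>
      {T. is_spanning_tree V E T} \<times> {S. S \<subseteq> E \<and> card S \<le> b}"
    using key unfolding f_def by auto
  have fin: "finite ({T. is_spanning_tree V E T} \<times> {S. S \<subseteq> E \<and> card S \<le> b})"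
    using finite_ST[OF gE] finite_small[OF graph_finite_edges[OF gE]] by simp
  have "tau V' E' \<le> card ({T. is_spanning_tree V E T} \<times> {S. S \<subseteq> E \<and> card S \<le> b})"
    unfolding tau_def using card_inj_on_le[OF inj img fin] .
  then show ?thesis unfolding tau_def b_def Good_def by (simp add: card_cartesian_product)
qed

lemma card_small_sum:
  assumes "finite E"
  shows "card {S. S \<subseteq> E \<and> card S \<le> k} = (\<Sum>j\<le>k. card E choose j)"
proof -
  have eq: "{S. S \<subseteq> E \<and> card S \<le> k} = (\<Union>j\<in>{..k}. {S. S \<subseteq> E \<and> card S = j})" by auto
  have "card (\<Union>j\<in>{..k}. {S. S \<subseteq> E \<and> card S = j}) = (\<Sum>j\<le>k. card {S. S \<subseteq> E \<and> card S = j})"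
  proof (rule card_UN_disjoint)
    show "\<forall>i\<in>{..k}. finite {S. S \<subseteq> E \<and> card S = i}"
    proof
      fix i
      have "{S. S \<subseteq> E \<and> card S = i} \<subseteq> Pow E" by auto
      then show "finite {S. S \<subseteq> E \<and> card S = i}" using assms by (meson finite_Pow_iff finite_subset)
    qed
  qed auto
  then show ?thesis unfolding eq using n_subsets[OF assms] by simp
qed

lemma small_bound:
  fixes t :: real
  assumes fE: "finite E" and t: "0 < t" "t \<le> 1"
  shows "real (card {S. S \<subseteq> E \<and> card S \<le> k}) * t ^ k \<le> exp (t * real (card E))"
proof -
  define m where "m = card E"
  have "real (card {S. S \<subseteq> E \<and> card S \<le> k}) * t ^ k = (\<Sum>j\<le>k. real (m choose j) * t ^ k)"
    unfolding card_small_sum[OF fE] m_def by (simp add: sum_distrib_right)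
  also have "\<dots> \<le> (\<Sum>j\<le>k. real (m choose j) * t ^ j)"
  proof (rule sum_mono)
    fix j assume "j \<in> {..k}"
    then have "t ^ k \<le> t ^ j" using t by (intro power_decreasing) auto
    then show "real (m choose j) * t ^ k \<le> real (m choose j) * t ^ j" by (simp add: mult_left_mono)
  qed
  also have "\<dots> \<le> (\<Sum>j\<le>m. real (m choose j) * t ^ j)"
  proof (cases "k \<le> m")
    case True
    show ?thesis by (rule sum_mono2) (use True t in auto)
  next
    case False
    have "(\<Sum>j\<le>k. real (m choose j) * t ^ j) = (\<Sum>j\<le>m. real (m choose j) * t ^ j)"
      by (rule sum.mono_neutral_right) (use False in auto)
    then show ?thesis by simp
  qed
  also have "\<dots> = (t + 1) ^ m" by (simp add: binomial_ring)
  also have "\<dots> \<le> exp t ^ m"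
    by (rule power_mono) (use t exp_ge_add_one_self[of t] in \<open>auto simp: add.commute\<close>)
  also have "\<dots> = exp (t * real m)" by (simp add: exp_of_nat_mult[symmetric] mult.commute)
  finally show ?thesis unfolding m_def .
qed

lemma tlnt: fixes t :: real assumes "0 < t" "t \<le> 1" shows "t * ln (1 / t) \<le> 2 * sqrt t"
proof -
  have s: "0 < sqrt t" using assms by simp
  have "ln (1 / t) = 2 * ln (1 / sqrt t)"
  proof -
    have "1 / t = (1 / sqrt t) ^ 2" using assms by (simp add: power_divide)
    then show ?thesis by (simp add: ln_realpow)
  qed
  also have "\<dots> \<le> 2 * (1 / sqrt t - 1)" using ln_le_minus_one[of "1 / sqrt t"] s by simp
  also have "\<dots> \<le> 2 / sqrt t" by simp
  finally have "ln (1 / t) \<le> 2 / sqrt t" .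
  then have "t * ln (1 / t) \<le> t * (2 / sqrt t)" using assms by (intro mult_left_mono) auto
  also have "\<dots> = 2 * sqrt t" using assms
    by (metis divide_divide_eq_right mult.commute real_div_sqrt order_less_imp_le times_divide_eq_right)
  finally show ?thesis .
qed

lemma lnK_bound:
  fixes C n :: real
  assumes fE: "finite E" and m: "real (card E) \<le> C * n" and n: "0 < n" and k: "real k \<le> n"
  shows "ln (real (card {S. S \<subseteq> E \<and> card S \<le> k})) \<le> n * (2 * sqrt (real k / n) + C * (real k / n))"
proof (cases "k = 0")
  case True
  have "{S. S \<subseteq> E \<and> card S \<le> k} = {{}}" using True fE by (auto dest: finite_subset)
  moreover have "0 \<le> C" using m n by (smt (verit) of_nat_0_le_iff zero_le_mult_iff)
  ultimately show ?thesis using True n by simp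
next
  case False
  define t where "t = real k / n"
  have t: "0 < t" "t \<le> 1" using False n k unfolding t_def by auto
  define K where "K = real (card {S. S \<subseteq> E \<and> card S \<le> k})"
  have K1: "1 \<le> K"
  proof -
    have "{} \<in> {S. S \<subseteq> E \<and> card S \<le> k}" by simp
    then have "card {S. S \<subseteq> E \<and> card S \<le> k} \<noteq> 0" using finite_small[OF fE, of k] by auto
    then show ?thesis unfolding K_def by simp
  qed
  have b: "K * t ^ k \<le> exp (t * real (card E))" unfolding K_def by (rule small_bound[OF fE t])
  have "ln (K * t ^ k) \<le> t * real (card E)"
    using b K1 t by (metis exp_le_cancel_iff exp_ln mult_pos_pos order_less_le_trans zero_less_one
        zero_less_power)
  then have "ln K + real k * ln t \<le> t * real (card E)"
    using K1 t by (simp add: ln_mult ln_realpow)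
  then have "ln K \<le> real k * ln (1 / t) + t * real (card E)" using t by (simp add: ln_div)
  also have "real k * ln (1 / t) = n * (t * ln (1 / t))" unfolding t_def using n by simp
  also have "t * real (card E) \<le> t * (C * n)" using m t by (simp add: mult_left_mono)
  finally have "ln K \<le> n * (t * ln (1 / t)) + t * (C * n)" by simp
  also have "\<dots> \<le> n * (2 * sqrt t) + t * (C * n)" using tlnt[OF t] n by simp
  finally show ?thesis unfolding K_def t_def by (simp add: algebra_simps)
qed

theorem corollary3p13:
  fixes V V' :: "nat \<Rightarrow> 'a set" and E E' :: "nat \<Rightarrow> 'a set set" and h :: real
  assumes conn: "\<And>n. connected_graph (V n) (E n)"
    and tight: "tight_graphs V E"
    and bdeg: "bdd_above (range (\<lambda>n. 2 * real (card (E n)) / real (card (V n))))"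
    and ent: "(\<lambda>n. ln (real (tau (V n) (E n))) / real (card (V n))) \<longlonglongrightarrow> h"
    and sub: "\<And>n. subgraph (V' n) (E' n) (V n) (E n)"
    and conn': "\<And>n. connected_graph (V' n) (E' n)"
    and full: "(\<lambda>n. real (card {x \<in> V' n. degree (E' n) x = degree (E n) x}) / real (card (V n)))
                 \<longlonglongrightarrow> 1"
  shows "(\<lambda>n. ln (real (tau (V' n) (E' n))) / real (card (V' n))) \<longlonglongrightarrow> h"
proof -
  define n where "n k = real (card (V k))" for k
  define N where "N k = real (card (V' k))" for k
  define gd where "gd k = card {x \<in> V' k. degree (E' k) x = degree (E k) x}" for k
  define bb where "bb k = card (V k) - gd k" for k
  define K1 where "K1 k = card {S. S \<subseteq> E k \<and> card S \<le> bb k}" for k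
  define K2 where "K2 k = card {S. S \<subseteq> E k \<and> card S \<le> 2 * bb k}" for k
  define x where "x k = real (bb k) / n k" for k
  define ta where "ta k = real (tau (V k) (E k))" for k
  define tb where "tb k = real (tau (V' k) (E' k))" for k
  have gE: "graph (V k) (E k)" for k using conn[of k] unfolding connected_graph_def by simp
  have gE': "graph (V' k) (E' k)" for k using conn'[of k] unfolding connected_graph_def by simp
  have fV: "finite (V k)" for k using gE[of k] unfolding graph_def by simp
  have fV': "finite (V' k)" for k using gE'[of k] unfolding graph_def by simp
  have fE: "finite (E k)" for k using graph_finite_edges[OF gE] .
  have npos: "n k > 0" for k
    using conn[of k] fV[of k] unfolding n_def connected_graph_def by (simp add: card_gt_0_iff)
  have Npos: "N k > 0" for k
    using conn'[of k] fV'[of k] unfolding N_def connected_graph_def by (simp add: card_gt_0_iff)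
  have VV: "V' k \<subseteq> V k" for k using sub[of k] unfolding subgraph_def by simp
  have gdN: "gd k \<le> card (V' k)" for k
    unfolding gd_def by (rule card_mono[OF fV']) auto
  have Nn: "card (V' k) \<le> card (V k)" for k by (rule card_mono[OF fV VV])
  have bbr: "real (bb k) = n k - real (gd k)" for k
    unfolding bb_def n_def using gdN[of k] Nn[of k] by simp
  have fullg: "(\<lambda>k. real (gd k) / n k) \<longlonglongrightarrow> 1" using full unfolding gd_def n_def .
  have xeq: "x k = 1 - real (gd k) / n k" for k
    unfolding x_def bbr using npos[of k] by (simp add: diff_divide_distrib)
  have x0: "x \<longlonglongrightarrow> 0"
    unfolding xeq using tendsto_diff[OF tendsto_const[of 1] fullg] by simp
  have xnn: "x k \<ge> 0" for k unfolding x_def using npos[of k] by simp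
  obtain D where D: "\<And>k. 2 * real (card (E k)) / real (card (V k)) \<le> D"
    using bdeg unfolding bdd_above_def by auto
  have mD: "real (card (E k)) \<le> (D / 2) * n k" for k
    using D[of k] npos[of k] unfolding n_def by (simp add: field_simps)
  define eps where "eps k = 2 * sqrt (2 * x k) + (D / 2) * (2 * x k)" for k
  have eps0: "eps \<longlonglongrightarrow> 0"
  proof -
    have "(\<lambda>k. 2 * sqrt (2 * x k) + (D / 2) * (2 * x k)) \<longlonglongrightarrow> 2 * sqrt (2 * 0) + (D / 2) * (2 * 0)"
      by (intro tendsto_intros x0)
    then show ?thesis unfolding eps_def by simp
  qed
  have ev_half: "eventually (\<lambda>k. x k < 1 / 2) sequentially"
    using order_tendstoD(2)[OF x0, of "1/2"] by simp
  have ta1: "ta k \<ge> 1" for k unfolding ta_def using tau_pos[OF conn[of k]] by simp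
  have tb1: "tb k \<ge> 1" for k unfolding tb_def using tau_pos[OF conn'[of k]] by simp
  have K11: "real (K1 k) \<ge> 1" for k
  proof -
    have "{} \<in> {S. S \<subseteq> E k \<and> card S \<le> bb k}" by simp
    then have "K1 k \<noteq> 0" unfolding K1_def using finite_small[OF fE[of k], of "bb k"] by auto
    then show ?thesis by simp
  qed
  have K12: "K1 k \<le> K2 k" for k
    unfolding K1_def K2_def by (rule card_mono[OF finite_small[OF fE]]) auto
  have hard: "ta k \<le> tb k * real (K2 k)" for k
  proof -
    have "tau (V k) (E k) \<le> tau (V' k) (E' k) * K2 k"
      using tau_hard[OF conn[of k] conn'[of k] sub[of k]] unfolding K2_def bb_def gd_def .
    then have "real (tau (V k) (E k)) \<le> real (tau (V' k) (E' k) * K2 k)" by (rule of_nat_mono)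
    then show ?thesis unfolding ta_def tb_def by simp
  qed
  have easy: "tb k \<le> ta k * real (K1 k)" for k
  proof -
    have "tau (V' k) (E' k) \<le> tau (V k) (E k) * K1 k"
      using tau_easy[OF conn[of k] conn'[of k] sub[of k]] unfolding K1_def bb_def gd_def .
    then have "real (tau (V' k) (E' k)) \<le> real (tau (V k) (E k) * K1 k)" by (rule of_nat_mono)
    then show ?thesis unfolding ta_def tb_def by simp
  qed
  have K21: "real (K2 k) \<ge> 1" for k
  proof -
    have "real (K1 k) \<le> real (K2 k)" using K12[of k] by (rule of_nat_mono)
    then show ?thesis using K11[of k] by linarith
  qed
  have lnh: "ln (ta k) \<le> ln (tb k) + ln (real (K2 k))" for k
  proof -
    have "ln (ta k) \<le> ln (tb k * real (K2 k))"
      using hard[of k] ta1[of k] by simp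
    also have "\<dots> = ln (tb k) + ln (real (K2 k))"
      using tb1[of k] K21[of k] ln_mult[of "tb k" "real (K2 k)"] by simp
    finally show ?thesis .
  qed
  have lne: "ln (tb k) \<le> ln (ta k) + ln (real (K2 k))" for k
  proof -
    have "ln (tb k) \<le> ln (ta k * real (K1 k))"
      using easy[of k] tb1[of k] by simp
    also have "\<dots> = ln (ta k) + ln (real (K1 k))"
      using ta1[of k] K11[of k] ln_mult[of "ta k" "real (K1 k)"] by simp
    also have "ln (real (K1 k)) \<le> ln (real (K2 k))"
      using K11[of k] K12[of k] by simp
    finally show ?thesis by simp
  qed
  define d where "d k = (ln (tb k) - ln (ta k)) / n k" for k
  have dbound: "eventually (\<lambda>k. norm (d k) \<le> eps k) sequentially"
    using ev_half
  proof eventually_elim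
    case (elim k)
    have k2: "real (2 * bb k) \<le> n k"
      using elim npos[of k] unfolding x_def by (simp add: field_simps)
    have "ln (real (K2 k)) \<le> n k * (2 * sqrt (real (2 * bb k) / n k) + (D / 2) * (real (2 * bb k) / n k))"
      unfolding K2_def by (rule lnK_bound[OF fE mD npos k2])
    also have "real (2 * bb k) / n k = 2 * x k" unfolding x_def by simp
    finally have lk: "ln (real (K2 k)) \<le> n k * eps k" unfolding eps_def .
    have "\<bar>ln (tb k) - ln (ta k)\<bar> \<le> n k * eps k" using lk lnh[of k] lne[of k] by linarith
    then have "\<bar>ln (tb k) - ln (ta k)\<bar> / n k \<le> eps k" using npos[of k] by (simp add: field_simps)
    then show ?case unfolding d_def using npos[of k] by simp
  qed
  have d0: "d \<longlonglongrightarrow> 0" by (rule Lim_null_comparison[OF dbound eps0])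
  have Nn1: "(\<lambda>k. N k / n k) \<longlonglongrightarrow> 1"
  proof (rule tendsto_sandwich[OF _ _ fullg tendsto_const])
    show "eventually (\<lambda>k. real (gd k) / n k \<le> N k / n k) sequentially"
    proof (rule always_eventually, rule allI)
      fix k
      have "real (gd k) \<le> N k" using gdN[of k] unfolding N_def by simp
      then show "real (gd k) / n k \<le> N k / n k" using npos[of k] by (simp add: divide_right_mono)
    qed
    show "eventually (\<lambda>k. N k / n k \<le> 1) sequentially"
    proof (rule always_eventually, rule allI)
      fix k
      have "N k \<le> n k" using Nn[of k] unfolding N_def n_def by simp
      then show "N k / n k \<le> 1" using npos[of k] by simp
    qed
  qed
  have nN1: "(\<lambda>k. n k / N k) \<longlonglongrightarrow> 1"
  proof -
    have "(\<lambda>k. 1 / (N k / n k)) \<longlonglongrightarrow> 1 / 1" by (rule tendsto_divide[OF tendsto_const Nn1]) simp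
    moreover have "1 / (N k / n k) = n k / N k" for k by simp
    ultimately show ?thesis by simp
  qed
  have lim: "(\<lambda>k. (ln (ta k) / n k + d k) * (n k / N k)) \<longlonglongrightarrow> (h + 0) * 1"
    by (intro tendsto_intros d0 nN1) (use ent in \<open>simp add: ta_def n_def\<close>)
  have eq: "(ln (ta k) / n k + d k) * (n k / N k) = ln (tb k) / N k" for k
    unfolding d_def using npos[of k] Npos[of k] by (simp add: field_simps)
  show ?thesis using lim unfolding eq by (simp add: tb_def N_def)
qed

end
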